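(* For every integer $p \ge 1$ there exist an integer $k$ and a $k$-colourable $(4K_1, C_4, \text{claw})$-free graph $G$ that is not $(k+p)$-mixing.
   Context: All graphs are finite and simple. A $k$-colouring of $G$ is a map $\alpha: V(G)\to\{1,\dots,k\}$ with $\alpha(u)\neq\alpha(v)$ for every edge $uv$; $G$ is $k$-colourable if one exists. The reconfiguration graph $\mathcal{R}_k(G)$ has the $k$-colourings of $G$ as vertices, two being adjacent if they differ on exactly one vertex; $G$ is $k$-mixing if $\mathcal{R}_k(G)$ is connected. A graph is $\mathcal{H}$-free for a set $\mathcal{H}$ of graphs if it contains no induced subgraph isomorphic to any member of $\mathcal{H}$. $4K_1$ is the edgeless graph on 4 vertices, $C_4$ the 4-cycle, and the claw is $K_{1,3}$. *)

theory Defs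
  imports Main
begin

definition simple_graph :: "'a set \<Rightarrow> ('a \<Rightarrow> 'a \<Rightarrow> bool) \<Rightarrow> bool" where
  "simple_graph V E \<longleftrightarrow> finite V \<and> (\<forall>u v. E u v \<longrightarrow> u \<in> V \<and> v \<in> V)
     \<and> (\<forall>u v. E u v \<longrightarrow> E v u) \<and> (\<forall>v. \<not> E v v)"

text \<open>A k-colouring: a map V -> {1..k} with distinct colours on adjacent vertices.
  To make colourings canonical objects (maps defined on V only), values outside V are fixed to 0.\<close>
definition colouring :: "nat \<Rightarrow> 'a set \<Rightarrow> ('a \<Rightarrow> 'a \<Rightarrow> bool) \<Rightarrow> ('a \<Rightarrow> nat) \<Rightarrow> bool" where
  "colouring k V E \<alpha> \<longleftrightarrow> (\<forall>v\<in>V. \<alpha> v \<in> {1..k}) \<and> (\<forall>v. v \<notin> V \<longrightarrow> \<alpha> v = 0)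
     \<and> (\<forall>u v. E u v \<longrightarrow> \<alpha> u \<noteq> \<alpha> v)"

definition colourable :: "nat \<Rightarrow> 'a set \<Rightarrow> ('a \<Rightarrow> 'a \<Rightarrow> bool) \<Rightarrow> bool" where
  "colourable k V E \<longleftrightarrow> (\<exists>\<alpha>. colouring k V E \<alpha>)"

definition recol_adj :: "nat \<Rightarrow> 'a set \<Rightarrow> ('a \<Rightarrow> 'a \<Rightarrow> bool) \<Rightarrow> ('a \<Rightarrow> nat) \<Rightarrow> ('a \<Rightarrow> nat) \<Rightarrow> bool" where
  "recol_adj k V E \<alpha> \<beta> \<longleftrightarrow> colouring k V E \<alpha> \<and> colouring k V E \<beta> \<and> card {v\<in>V. \<alpha> v \<noteq> \<beta> v} = 1"

definition mixing :: "nat \<Rightarrow> 'a set \<Rightarrow> ('a \<Rightarrow> 'a \<Rightarrow> bool) \<Rightarrow> bool" where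
  "mixing k V E \<longleftrightarrow> (\<forall>\<alpha> \<beta>. colouring k V E \<alpha> \<longrightarrow> colouring k V E \<beta> \<longrightarrow> (recol_adj k V E)\<^sup>*\<^sup>* \<alpha> \<beta>)"

definition induced_sub :: "'b set \<Rightarrow> ('b \<Rightarrow> 'b \<Rightarrow> bool) \<Rightarrow> 'a set \<Rightarrow> ('a \<Rightarrow> 'a \<Rightarrow> bool) \<Rightarrow> bool" where
  "induced_sub W F V E \<longleftrightarrow> (\<exists>f. inj_on f W \<and> f ` W \<subseteq> V \<and> (\<forall>x\<in>W. \<forall>y\<in>W. E (f x) (f y) \<longleftrightarrow> F x y))"

definition fourK1 :: "nat \<Rightarrow> nat \<Rightarrow> bool" where
  "fourK1 x y \<longleftrightarrow> False"

definition C4 :: "nat \<Rightarrow> nat \<Rightarrow> bool" where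
  "C4 x y \<longleftrightarrow> x < 4 \<and> y < 4 \<and> (y = (x + 1) mod 4 \<or> x = (y + 1) mod 4)"

definition claw :: "nat \<Rightarrow> nat \<Rightarrow> bool" where
  "claw x y \<longleftrightarrow> x < 4 \<and> y < 4 \<and> x \<noteq> y \<and> (x = 0 \<or> y = 0)"

definition fourK1_C4_claw_free :: "'a set \<Rightarrow> ('a \<Rightarrow> 'a \<Rightarrow> bool) \<Rightarrow> bool" where
  "fourK1_C4_claw_free V E \<longleftrightarrow> \<not> induced_sub {0..<4::nat} fourK1 V E
     \<and> \<not> induced_sub {0..<4::nat} C4 V E \<and> \<not> induced_sub {0..<4::nat} claw V E"

end

theory Submission
  imports Defs
begin

definition near :: "nat \<Rightarrow> nat \<Rightarrow> bool" where
  "near x y \<longleftrightarrow> x = y \<or> x = y + 1 \<or> y = x + 1 \<or> (x = 0 \<and> y = 5) \<or> (x = 5 \<and> y = 0)"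
definition GE :: "nat \<Rightarrow> nat \<Rightarrow> nat \<Rightarrow> bool" where
  "GE t u v \<longleftrightarrow> u \<noteq> v \<and> u < 6 * t \<and> v < 6 * t \<and> near (u mod 6) (v mod 6)"
lemma six: "a < (6::nat) \<Longrightarrow> a = 0 \<or> a = 1 \<or> a = 2 \<or> a = 3 \<or> a = 4 \<or> a = 5" by arith

definition gam :: "nat \<Rightarrow> nat \<Rightarrow> nat" where
  "gam t v = (if v < 6 * t then 2 * (v div 6) + v mod 2 + 1 else 0)"

definition alp :: "nat \<Rightarrow> nat \<Rightarrow> nat" where
  "alp t v = (if v < 6 * t then 3 * (v div 6) + v mod 3 + 1 else 0)"

lemma fin4: "a < 6 \<Longrightarrow> b < 6 \<Longrightarrow> c < 6 \<Longrightarrow> d < 6 \<Longrightarrow> \<not> near a b \<Longrightarrow> \<not> near a c \<Longrightarrow> \<not> near a d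
  \<Longrightarrow> \<not> near b c \<Longrightarrow> \<not> near b d \<Longrightarrow> \<not> near c d \<Longrightarrow> False"
  apply (drule six)+ apply (elim disjE) by (simp_all add: near_def)
lemma finC4: "a < 6 \<Longrightarrow> b < 6 \<Longrightarrow> c < 6 \<Longrightarrow> d < 6 \<Longrightarrow> near a b \<Longrightarrow> near b c \<Longrightarrow> near c d
  \<Longrightarrow> near d a \<Longrightarrow> \<not> near a c \<Longrightarrow> \<not> near b d \<Longrightarrow> False"
  apply (drule six)+ apply (elim disjE) by (simp_all add: near_def)
lemma finclaw: "a < 6 \<Longrightarrow> b < 6 \<Longrightarrow> c < 6 \<Longrightarrow> d < 6 \<Longrightarrow> near a b \<Longrightarrow> near a c \<Longrightarrow> near a d
  \<Longrightarrow> \<not> near b c \<Longrightarrow> \<not> near b d \<Longrightarrow> \<not> near c d \<Longrightarrow> False"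
  apply (drule six)+ apply (elim disjE) by (simp_all add: near_def)

lemma GE_bag: "u \<noteq> v \<Longrightarrow> u < 6 * t \<Longrightarrow> v < 6 * t \<Longrightarrow> GE t u v \<longleftrightarrow> near (u mod 6) (v mod 6)"
  by (simp add: GE_def)

lemma sg: "simple_graph {..<6*t} (GE t)"
  unfolding simple_graph_def GE_def near_def by auto

lemma gen:
  assumes "induced_sub {0..<4::nat} F {..<6*t} (GE t)"
  obtains f where "\<And>i j. i < 4 \<Longrightarrow> j < 4 \<Longrightarrow> i \<noteq> j \<Longrightarrow> near (f i mod 6) (f j mod 6) \<longleftrightarrow> F i j"
    "\<And>i. f i mod 6 < 6"
proof -
  from assms obtain f where inj: "inj_on f {0..<4}" and sub: "f ` {0..<4} \<subseteq> {..<6*t}"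
    and iff: "\<forall>x\<in>{0..<4}. \<forall>y\<in>{0..<4}. GE t (f x) (f y) \<longleftrightarrow> F x y"
    unfolding induced_sub_def by blast
  have "near (f i mod 6) (f j mod 6) \<longleftrightarrow> F i j" if "i < 4" "j < 4" "i \<noteq> j" for i j
  proof -
    have "f i \<noteq> f j" using inj_onD[OF inj, of i j] that by auto
    moreover have "f i < 6*t" "f j < 6*t" using sub that by (auto simp: image_subset_iff)
    moreover have "GE t (f i) (f j) \<longleftrightarrow> F i j" using iff that by auto
    ultimately show ?thesis using GE_bag[of "f i" "f j" t] by simp
  qed
  then show ?thesis using that by auto
qed

lemma freeG: "fourK1_C4_claw_free {..<6*t} (GE t)"
  unfolding fourK1_C4_claw_free_def
proof (intro conjI notI)
  assume a: "induced_sub {0..<4::nat} fourK1 {..<6*t} (GE t)"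
  obtain f where h: "\<And>i j. i < 4 \<Longrightarrow> j < 4 \<Longrightarrow> i \<noteq> j \<Longrightarrow> near (f i mod 6) (f j mod 6) \<longleftrightarrow> fourK1 i j"
    "\<And>i. f i mod 6 < 6" using gen[OF a] by blast
  show False
    apply (rule fin4[of "f 0 mod 6" "f 1 mod 6" "f 2 mod 6" "f 3 mod 6"])
    using h by (simp_all add: fourK1_def)
next
  assume a: "induced_sub {0..<4::nat} C4 {..<6*t} (GE t)"
  obtain f where h: "\<And>i j. i < 4 \<Longrightarrow> j < 4 \<Longrightarrow> i \<noteq> j \<Longrightarrow> near (f i mod 6) (f j mod 6) \<longleftrightarrow> C4 i j"
    "\<And>i. f i mod 6 < 6" using gen[OF a] by blast
  show False
    apply (rule finC4[of "f 0 mod 6" "f 1 mod 6" "f 2 mod 6" "f 3 mod 6"])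
    using h by (simp_all add: C4_def)
next
  assume a: "induced_sub {0..<4::nat} claw {..<6*t} (GE t)"
  obtain f where h: "\<And>i j. i < 4 \<Longrightarrow> j < 4 \<Longrightarrow> i \<noteq> j \<Longrightarrow> near (f i mod 6) (f j mod 6) \<longleftrightarrow> claw i j"
    "\<And>i. f i mod 6 < 6" using gen[OF a] by blast
  show False
    apply (rule finclaw[of "f 0 mod 6" "f 1 mod 6" "f 2 mod 6" "f 3 mod 6"])
    using h by (simp_all add: claw_def)
qed


lemma near_mod2: "a < 6 \<Longrightarrow> b < 6 \<Longrightarrow> near a b \<Longrightarrow> a \<noteq> b \<Longrightarrow> a mod 2 \<noteq> b mod 2"
  by (drule six)+ (elim disjE; simp add: near_def)
lemma near_mod3: "a < 6 \<Longrightarrow> b < 6 \<Longrightarrow> near a b \<Longrightarrow> a \<noteq> b \<Longrightarrow> a mod 3 \<noteq> b mod 3"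
  by (drule six)+ (elim disjE; simp add: near_def)
lemma near_ex: "i < 6 \<Longrightarrow> r < 3 \<Longrightarrow> near i r \<or> near i (r+3)"
  by (drule six, subgoal_tac "r = 0 \<or> r = 1 \<or> r = 2") (auto simp: near_def)

lemma lin_mod: "(r::nat) < m \<Longrightarrow> s < m \<Longrightarrow> r \<noteq> s \<Longrightarrow> m*a + r \<noteq> m*b + s"
proof
  assume "r < m" "s < m" "r \<noteq> s" "m*a + r = m*b + s"
  then have "(m*a + r) mod m = (m*b + s) mod m" by simp
  then show False using \<open>r < m\<close> \<open>s < m\<close> \<open>r \<noteq> s\<close> by simp
qed

lemma divmod_eq: "(u::nat) div 6 = v div 6 \<Longrightarrow> u mod 6 = v mod 6 \<Longrightarrow> u = v"
  by (metis div_mult_mod_eq)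

lemma gam_col: "colouring (2*t) {..<6*t} (GE t) (gam t)"
  unfolding colouring_def
proof (intro conjI allI impI ballI)
  fix v assume "v \<in> {..<6*t}"
  then have "v < 6*t" by simp
  then have "v div 6 < t" by (simp add: div_less_iff_less_mult mult.commute)
  moreover have "v mod 2 < 2" by simp
  ultimately show "gam t v \<in> {1..2*t}" using \<open>v < 6*t\<close> unfolding gam_def by auto
next
  fix v :: nat assume "v \<notin> {..<6*t}" then show "gam t v = 0" by (simp add: gam_def)
next
  fix u v assume e: "GE t u v"
  have m: "u mod 2 = (u mod 6) mod 2" "v mod 2 = (v mod 6) mod 2" by (simp_all add: mod_mod_cancel)
  show "gam t u \<noteq> gam t v"
  proof (cases "u mod 6 = v mod 6")
    case True
    then have "u div 6 \<noteq> v div 6" using e divmod_eq unfolding GE_def by blast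
    then show ?thesis using e m True unfolding GE_def gam_def by auto
  next
    case False
    then have "u mod 2 \<noteq> v mod 2" using near_mod2[of "u mod 6" "v mod 6"] e m unfolding GE_def by simp
    then show ?thesis using e lin_mod[of "u mod 2" 2 "v mod 2" "u div 6" "v div 6"] unfolding GE_def gam_def by simp
  qed
qed

lemma alp_col: "colouring (3*t) {..<6*t} (GE t) (alp t)"
  unfolding colouring_def
proof (intro conjI allI impI ballI)
  fix v assume "v \<in> {..<6*t}"
  then have "v < 6*t" by simp
  then have "v div 6 < t" by (simp add: div_less_iff_less_mult mult.commute)
  moreover have "v mod 3 < 3" by simp
  ultimately show "alp t v \<in> {1..3*t}" using \<open>v < 6*t\<close> unfolding alp_def by auto
next
  fix v :: nat assume "v \<notin> {..<6*t}" then show "alp t v = 0" by (simp add: alp_def)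
next
  fix u v assume e: "GE t u v"
  have m: "u mod 3 = (u mod 6) mod 3" "v mod 3 = (v mod 6) mod 3" by (simp_all add: mod_mod_cancel)
  show "alp t u \<noteq> alp t v"
  proof (cases "u mod 6 = v mod 6")
    case True
    then have "u div 6 \<noteq> v div 6" using e divmod_eq unfolding GE_def by blast
    then show ?thesis using e m True unfolding GE_def alp_def by auto
  next
    case False
    then have "u mod 3 \<noteq> v mod 3" using near_mod3[of "u mod 6" "v mod 6"] e m unfolding GE_def by simp
    then show ?thesis using e lin_mod[of "u mod 3" 3 "v mod 3" "u div 6" "v div 6"] unfolding GE_def alp_def by simp
  qed
qed

lemma frozen: "\<not> recol_adj (3*t) {..<6*t} (GE t) (alp t) \<beta>"
proof
  assume "recol_adj (3*t) {..<6*t} (GE t) (alp t) \<beta>"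
  then have bc: "colouring (3*t) {..<6*t} (GE t) \<beta>"
    and c1: "card {v\<in>{..<6*t}. alp t v \<noteq> \<beta> v} = 1" unfolding recol_adj_def by auto
  from c1 obtain w where W: "{v\<in>{..<6*t}. alp t v \<noteq> \<beta> v} = {w}" by (rule card_1_singletonE)
  then have w: "w < 6*t" "alp t w \<noteq> \<beta> w" by auto
  have oth: "\<beta> v = alp t v" if "v < 6*t" "v \<noteq> w" for v
  proof (rule ccontr)
    assume "\<beta> v \<noteq> alp t v"
    then have "v \<in> {v\<in>{..<6*t}. alp t v \<noteq> \<beta> v}" using that by auto
    then show False using W that by (metis singletonD)
  qed
  have bw: "\<beta> w \<in> {1..3*t}" using bc w unfolding colouring_def by auto
  define c where "c = \<beta> w - 1"
  define j where "j = c div 3"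
  define r where "r = c mod 3"
  have "c < 3*t" using bw unfolding c_def by auto
  then have jt: "j < t" unfolding j_def by (simp add: div_less_iff_less_mult mult.commute)
  have r3: "r < 3" unfolding r_def by auto
  have "c = 3 * j + r" unfolding j_def r_def by simp
  then have cw: "\<beta> w = 3 * j + r + 1" using bw unfolding c_def by auto
  obtain s where s: "s < 6" "s mod 3 = r" "near (w mod 6) s"
  proof (cases "near (w mod 6) r")
    case True then show ?thesis using that[of r] r3 by simp
  next
    case False then show ?thesis using that[of "r+3"] r3 near_ex[of "w mod 6" r] by simp
  qed
  define u where "u = 6 * j + s"
  have u1: "u < 6 * t" using jt s(1) unfolding u_def by linarith
  have u2: "u mod 6 = s" "u div 6 = j" using s(1) unfolding u_def by simp_all
  have "u mod 3 = (u mod 6) mod 3" by (simp add: mod_mod_cancel)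
  then have u3: "u mod 3 = r" using u2 s(2) by simp
  note u = u1 u2 u3
  have au: "alp t u = \<beta> w" using u cw unfolding alp_def by simp
  have "u \<noteq> w" using au w by auto
  then have "GE t w u" using u w s unfolding GE_def by auto
  then have "\<beta> w \<noteq> \<beta> u" using bc unfolding colouring_def by blast
  moreover have "\<beta> u = alp t u" using oth u \<open>u \<noteq> w\<close> by simp
  ultimately show False using au by simp
qed

lemma col_mono: "colouring k V E a \<Longrightarrow> k \<le> m \<Longrightarrow> colouring m V E a"
  unfolding colouring_def by fastforce

theorem theorem4:
  fixes p :: nat
  assumes "p \<ge> 1"
  shows "\<exists>(k::nat) (V::nat set) E. simple_graph V E \<and> fourK1_C4_claw_free V E
           \<and> colourable k V E \<and> \<not> mixing (k + p) V E"
proof (intro exI conjI)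
  show "simple_graph {..<6*p} (GE p)" by (rule sg)
  show "fourK1_C4_claw_free {..<6*p} (GE p)" by (rule freeG)
  show "colourable (2*p) {..<6*p} (GE p)" unfolding colourable_def using gam_col by blast
  show "\<not> mixing (2*p + p) {..<6*p} (GE p)"
  proof
    assume mx: "mixing (2*p + p) {..<6*p} (GE p)"
    have k: "2*p + p = 3*p" by simp
    have g: "colouring (3*p) {..<6*p} (GE p) (gam p)" using col_mono[OF gam_col] by simp
    have "(recol_adj (3*p) {..<6*p} (GE p))\<^sup>*\<^sup>* (alp p) (gam p)"
      using mx g alp_col unfolding mixing_def k by blast
    moreover have "alp p \<noteq> gam p"
    proof
      assume "alp p = gam p"
      then have "alp p 2 = gam p 2" by simp
      moreover have "(2::nat) < 6 * p" using assms by simp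
      ultimately show False unfolding alp_def gam_def by simp
    qed
    ultimately show False
      by (auto elim: converse_rtranclpE simp: frozen)
  qed
qed

end
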